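(* Let $(A,+,\circ)$ be a finite left brace which has a transitive cycle base, let $g$ be an element of a transitive cycle base $X$ of $A$, and let $(A,\bullet)$ be the cycle set given by $a\bullet b:=\lambda_a(g)^{-}\circ b$. Let $H$ be the subgroup of $(A,\circ)$ such that $\mathrm{Ret}(A,\bullet)=A/H$ (namely $H=\{h\in A\mid\lambda_h(g)=g\}$). If $H$ is a normal subgroup of $(A,\circ)$, then $H=\mathrm{Soc}(A)$.
   Context: A left brace is a set $A$ with two operations such that $(A,+)$ is an abelian group, $(A,\circ)$ is a group, and $a\circ(b+c)=a\circ b-a+a\circ c$. $\lambda_a(b):=-a+a\circ b$; $a\mapsto\lambda_a$ is a homomorphism $(A,\circ)\to\mathrm{Aut}(A,+)$. $a^{-}$ is the inverse of $a$ in $(A,\circ)$. $\mathrm{Soc}(A):=\{a\mid\lambda_a=\mathrm{id}_A\}$. A transitive cycle base is a single $\lambda$-orbit generating $(A,+)$. For a cycle set (left multiplications $\sigma_x$ bijective, $(x\cdot y)\cdot(x\cdot z)=(y\cdot x)\cdot(y\cdot z)$), $\mathrm{Ret}(X)$ is the quotient by $x\sim y\iff\sigma_x=\sigma_y$; for $(A,\bullet)$ its classes are the left cosets $a\circ H$. *)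

theory Defs
  imports "HOL-Algebra.Algebra"
begin

definition left_brace :: "'a monoid \<Rightarrow> 'a monoid \<Rightarrow> bool" where
  "left_brace Add Mul \<longleftrightarrow>
     comm_group Add \<and> group Mul \<and> carrier Add = carrier Mul \<and>
     (\<forall>a\<in>carrier Mul. \<forall>b\<in>carrier Mul. \<forall>c\<in>carrier Mul.
        a \<otimes>\<^bsub>Mul\<^esub> (b \<otimes>\<^bsub>Add\<^esub> c)
          = (a \<otimes>\<^bsub>Mul\<^esub> b) \<otimes>\<^bsub>Add\<^esub> inv\<^bsub>Add\<^esub> a \<otimes>\<^bsub>Add\<^esub> (a \<otimes>\<^bsub>Mul\<^esub> c))"

definition brace_lambda :: "'a monoid \<Rightarrow> 'a monoid \<Rightarrow> 'a \<Rightarrow> 'a \<Rightarrow> 'a" where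
  "brace_lambda Add Mul a b = inv\<^bsub>Add\<^esub> a \<otimes>\<^bsub>Add\<^esub> (a \<otimes>\<^bsub>Mul\<^esub> b)"

definition brace_soc :: "'a monoid \<Rightarrow> 'a monoid \<Rightarrow> 'a set" where
  "brace_soc Add Mul = {a \<in> carrier Mul. \<forall>b\<in>carrier Mul. brace_lambda Add Mul a b = b}"

definition lambda_orbit :: "'a monoid \<Rightarrow> 'a monoid \<Rightarrow> 'a \<Rightarrow> 'a set" where
  "lambda_orbit Add Mul x = (\<lambda>a. brace_lambda Add Mul a x) ` carrier Mul"

definition transitive_cycle_base :: "'a monoid \<Rightarrow> 'a monoid \<Rightarrow> 'a set \<Rightarrow> bool" where
  "transitive_cycle_base Add Mul B \<longleftrightarrow>
     (\<exists>x\<in>carrier Mul. B = lambda_orbit Add Mul x) \<and> generate Add B = carrier Add"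

end

theory Submission
  imports Defs
begin

lemma lam_closed:
  assumes lb: "left_brace Add Mul" and a: "a \<in> carrier Mul" and b: "b \<in> carrier Mul"
  shows "brace_lambda Add Mul a b \<in> carrier Mul"
proof -
  interpret A: comm_group Add using lb unfolding left_brace_def by blast
  interpret M: group Mul using lb unfolding left_brace_def by blast
  have c: "carrier Add = carrier Mul" using lb unfolding left_brace_def by blast
  show ?thesis unfolding brace_lambda_def using a b c by auto
qed

lemma lam_add:
  assumes lb: "left_brace Add Mul" and a: "a \<in> carrier Mul" and b: "b \<in> carrier Mul"
    and cc: "c \<in> carrier Mul"
  shows "brace_lambda Add Mul a (b \<otimes>\<^bsub>Add\<^esub> c)
     = brace_lambda Add Mul a b \<otimes>\<^bsub>Add\<^esub> brace_lambda Add Mul a c"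
proof -
  interpret A: comm_group Add using lb unfolding left_brace_def by blast
  interpret M: group Mul using lb unfolding left_brace_def by blast
  have c: "carrier Add = carrier Mul" using lb unfolding left_brace_def by blast
  have e: "a \<otimes>\<^bsub>Mul\<^esub> (b \<otimes>\<^bsub>Add\<^esub> c)
          = (a \<otimes>\<^bsub>Mul\<^esub> b) \<otimes>\<^bsub>Add\<^esub> inv\<^bsub>Add\<^esub> a \<otimes>\<^bsub>Add\<^esub> (a \<otimes>\<^bsub>Mul\<^esub> c)"
    using lb a b cc unfolding left_brace_def by blast
  have aA: "a \<in> carrier Add" and bA: "b \<in> carrier Add" and cA: "c \<in> carrier Add"
    and abA: "a \<otimes>\<^bsub>Mul\<^esub> b \<in> carrier Add" and acA: "a \<otimes>\<^bsub>Mul\<^esub> c \<in> carrier Add"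
    using a b cc c by auto
  show ?thesis unfolding brace_lambda_def e using aA abA acA by (simp add: A.m_assoc)
qed

lemma lam_hom:
  assumes lb: "left_brace Add Mul" and a: "a \<in> carrier Mul"
  shows "group_hom Add Add (brace_lambda Add Mul a)"
proof -
  interpret A: comm_group Add using lb unfolding left_brace_def by blast
  have c: "carrier Add = carrier Mul" using lb unfolding left_brace_def by blast
  show ?thesis
    unfolding group_hom_def group_hom_axioms_def
    using A.is_group lam_closed[OF lb a] lam_add[OF lb a] c
    by (auto intro!: homI)
qed

lemma lam_comp:
  assumes lb: "left_brace Add Mul" and a: "a \<in> carrier Mul" and b: "b \<in> carrier Mul"
    and cc: "c \<in> carrier Mul"
  shows "brace_lambda Add Mul (a \<otimes>\<^bsub>Mul\<^esub> b) c = brace_lambda Add Mul a (brace_lambda Add Mul b c)"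
proof -
  interpret A: comm_group Add using lb unfolding left_brace_def by blast
  interpret M: group Mul using lb unfolding left_brace_def by blast
  interpret H: group_hom Add Add "brace_lambda Add Mul a" using lam_hom[OF lb a] .
  have c: "carrier Add = carrier Mul" using lb unfolding left_brace_def by blast
  have "brace_lambda Add Mul a (brace_lambda Add Mul b c)
     = brace_lambda Add Mul a (inv\<^bsub>Add\<^esub> b) \<otimes>\<^bsub>Add\<^esub> brace_lambda Add Mul a (b \<otimes>\<^bsub>Mul\<^esub> c)"
  proof -
    have i: "inv\<^bsub>Add\<^esub> b \<in> carrier Mul" using b c by (metis A.inv_closed)
    have j: "b \<otimes>\<^bsub>Mul\<^esub> c \<in> carrier Mul" using b cc by simp
    show ?thesis unfolding brace_lambda_def[of Add Mul b c] using lam_add[OF lb a i j] .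
  qed
  also have "\<dots> = inv\<^bsub>Add\<^esub> (brace_lambda Add Mul a b) \<otimes>\<^bsub>Add\<^esub> brace_lambda Add Mul a (b \<otimes>\<^bsub>Mul\<^esub> c)"
    using H.hom_inv[of b] b c by simp
  also have "\<dots> = brace_lambda Add Mul (a \<otimes>\<^bsub>Mul\<^esub> b) c"
  proof -
    have aA: "a \<in> carrier Add" and abA: "a \<otimes>\<^bsub>Mul\<^esub> b \<in> carrier Add"
      and abcA: "a \<otimes>\<^bsub>Mul\<^esub> (b \<otimes>\<^bsub>Mul\<^esub> c) \<in> carrier Add"
      using a b cc c by auto
    have "inv\<^bsub>Add\<^esub> (inv\<^bsub>Add\<^esub> a \<otimes>\<^bsub>Add\<^esub> (a \<otimes>\<^bsub>Mul\<^esub> b)) \<otimes>\<^bsub>Add\<^esub>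
        (inv\<^bsub>Add\<^esub> a \<otimes>\<^bsub>Add\<^esub> (a \<otimes>\<^bsub>Mul\<^esub> (b \<otimes>\<^bsub>Mul\<^esub> c)))
      = inv\<^bsub>Add\<^esub> (a \<otimes>\<^bsub>Mul\<^esub> b) \<otimes>\<^bsub>Add\<^esub> (a \<otimes>\<^bsub>Mul\<^esub> (b \<otimes>\<^bsub>Mul\<^esub> c))"
      using aA abA abcA
      by (simp add: A.inv_mult A.m_assoc A.inv_inv A.r_inv del: A.r_inv_ex,
          subst A.m_lcomm, simp_all add: A.m_assoc[symmetric] A.r_inv)
    thus ?thesis unfolding brace_lambda_def using a b cc by (simp add: M.m_assoc)
  qed
  finally show ?thesis by simp
qed

theorem mainTheorem4:
  fixes Add Mul :: "'a monoid" and B :: "'a set" and g :: 'a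
  assumes "left_brace Add Mul"
    and "finite (carrier Mul)"
    and "transitive_cycle_base Add Mul B"
    and "g \<in> B"
    and "{h \<in> carrier Mul. brace_lambda Add Mul h g = g} \<lhd> Mul"
  shows "{h \<in> carrier Mul. brace_lambda Add Mul h g = g} = brace_soc Add Mul"
proof -
  note lb = assms(1)
  interpret A: comm_group Add using lb unfolding left_brace_def by blast
  interpret M: group Mul using lb unfolding left_brace_def by blast
  have c: "carrier Add = carrier Mul" using lb unfolding left_brace_def by blast
  define H where "H = {h \<in> carrier Mul. brace_lambda Add Mul h g = g}"
  interpret N: normal H Mul unfolding H_def by (rule assms(5))
  obtain x where x: "x \<in> carrier Mul" and Bx: "B = lambda_orbit Add Mul x"
    and gen: "generate Add B = carrier Add"
    using assms(3) unfolding transitive_cycle_base_def by blast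
  obtain b where b: "b \<in> carrier Mul" and gb: "g = brace_lambda Add Mul b x"
    using assms(4) Bx unfolding lambda_orbit_def by blast
  have gc: "g \<in> carrier Mul" using gb lam_closed[OF lb b x] by simp
  have fixB: "brace_lambda Add Mul h y = y" if h: "h \<in> H" and y: "y \<in> B" for h y
  proof -
    obtain a where a: "a \<in> carrier Mul" and ya: "y = brace_lambda Add Mul a x"
      using y Bx unfolding lambda_orbit_def by blast
    define d where "d = a \<otimes>\<^bsub>Mul\<^esub> inv\<^bsub>Mul\<^esub> b"
    have d: "d \<in> carrier Mul" using a b d_def by simp
    have db: "d \<otimes>\<^bsub>Mul\<^esub> b = a" unfolding d_def using a b by (simp add: M.m_assoc)
    have yd: "y = brace_lambda Add Mul d g"
      using lam_comp[OF lb d b x] unfolding db ya gb .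
    have hc: "h \<in> carrier Mul" using h unfolding H_def by blast
    have k': "inv\<^bsub>Mul\<^esub> d \<otimes>\<^bsub>Mul\<^esub> h \<otimes>\<^bsub>Mul\<^esub> d \<in> H"
      using N.inv_op_closed1[OF d h] .
    hence kf: "brace_lambda Add Mul (inv\<^bsub>Mul\<^esub> d \<otimes>\<^bsub>Mul\<^esub> h \<otimes>\<^bsub>Mul\<^esub> d) g = g"
      unfolding H_def by blast
    have "h \<otimes>\<^bsub>Mul\<^esub> d = d \<otimes>\<^bsub>Mul\<^esub> (inv\<^bsub>Mul\<^esub> d \<otimes>\<^bsub>Mul\<^esub> h \<otimes>\<^bsub>Mul\<^esub> d)"
    proof -
      have di: "inv\<^bsub>Mul\<^esub> d \<in> carrier Mul" using d by (rule M.inv_closed)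
      have "d \<otimes>\<^bsub>Mul\<^esub> (inv\<^bsub>Mul\<^esub> d \<otimes>\<^bsub>Mul\<^esub> h \<otimes>\<^bsub>Mul\<^esub> d)
          = (d \<otimes>\<^bsub>Mul\<^esub> inv\<^bsub>Mul\<^esub> d) \<otimes>\<^bsub>Mul\<^esub> h \<otimes>\<^bsub>Mul\<^esub> d"
        using d di hc by (simp only: M.m_assoc M.m_closed)
      also have "\<dots> = h \<otimes>\<^bsub>Mul\<^esub> d" using M.r_inv[OF d] M.l_one[OF hc] by simp
      finally show ?thesis by simp
    qed
    hence hd: "h \<otimes>\<^bsub>Mul\<^esub> d = d \<otimes>\<^bsub>Mul\<^esub> (inv\<^bsub>Mul\<^esub> d \<otimes>\<^bsub>Mul\<^esub> h \<otimes>\<^bsub>Mul\<^esub> d)" .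
    have kc: "inv\<^bsub>Mul\<^esub> d \<otimes>\<^bsub>Mul\<^esub> h \<otimes>\<^bsub>Mul\<^esub> d \<in> carrier Mul" using d hc by simp
    have "brace_lambda Add Mul h y = brace_lambda Add Mul (h \<otimes>\<^bsub>Mul\<^esub> d) g"
      unfolding yd using lam_comp[OF lb hc d gc] by simp
    also have "\<dots> = brace_lambda Add Mul d (brace_lambda Add Mul (inv\<^bsub>Mul\<^esub> d \<otimes>\<^bsub>Mul\<^esub> h \<otimes>\<^bsub>Mul\<^esub> d) g)"
      unfolding hd using lam_comp[OF lb d kc gc] .
    finally have "brace_lambda Add Mul h y = brace_lambda Add Mul d (brace_lambda Add Mul (inv\<^bsub>Mul\<^esub> d \<otimes>\<^bsub>Mul\<^esub> h \<otimes>\<^bsub>Mul\<^esub> d) g)" .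
    thus ?thesis using kf yd by simp
  qed
  have fixall: "brace_lambda Add Mul h y = y" if h: "h \<in> H" and y: "y \<in> carrier Mul" for h y
  proof -
    have hc: "h \<in> carrier Mul" using h unfolding H_def by blast
    interpret G: group_hom Add Add "brace_lambda Add Mul h" using lam_hom[OF lb hc] .
    have "y \<in> generate Add B" using y gen c by simp
    thus ?thesis
    proof (induction rule: generate.induct)
      case one then show ?case by simp
    next
      case (incl z) then show ?case using fixB[OF h] by simp
    next
      case (inv z)
      have zc: "z \<in> carrier Add" using inv Bx c lam_closed[OF lb _ x] unfolding lambda_orbit_def by auto
      show ?case using G.hom_inv[OF zc] fixB[OF h inv] by simp
    next
      case (eng z w)
      have "z \<in> carrier Add" "w \<in> carrier Add" using eng(1,2) gen by auto
      then show ?case using G.hom_mult eng(3,4) by simp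
    qed
  qed
  have "H \<subseteq> brace_soc Add Mul"
    using fixall unfolding brace_soc_def H_def by auto
  moreover have "brace_soc Add Mul \<subseteq> H"
    unfolding brace_soc_def H_def using gc by auto
  ultimately show ?thesis unfolding H_def by blast
qed

end
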